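(* Let $F$ be a finite field of characteristic $3$. Let $k\ge 0$ be an integer, $m=3k+1$, and $t$ an integer with $t^3\equiv 1\pmod m$ and $\gcd(m,t-1)=1$. Let $G=T_{3m}=\langle x,y\mid x^m=y^3=1,\ y^{-1}xy=x^t\rangle$ (of order $3m$), $FG$ its group algebra, and $H=\langle x\rangle$. Then $Z(\Delta(G,H))\subseteq Z(FG)$.
   Context: $\Delta(G,H)$ is the ideal of $FG$ generated by $\{h-1\mid h\in H\}$; $Z(R)$ denotes the center of a ring $R$, i.e. the set of elements of $R$ commuting with all elements of $R$. *)

theory Defs
  imports "HOL-Algebra.Algebra"
begin

text \<open>Group algebra FG of a finite group G over a field F, modelled as the
functions carrier G \<rightarrow> F (zero outside the carrier), with convolution.\<close>

definition group_alg :: "('g, 'b) monoid_scheme \<Rightarrow> ('g \<Rightarrow> 'f::field) set" where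
  "group_alg G = {a. \<forall>g. g \<notin> carrier G \<longrightarrow> a g = 0}"

definition ga_mult :: "('g, 'b) monoid_scheme \<Rightarrow> ('g \<Rightarrow> 'f::field) \<Rightarrow> ('g \<Rightarrow> 'f) \<Rightarrow> ('g \<Rightarrow> 'f)" where
  "ga_mult G a b = (\<lambda>g. if g \<in> carrier G
      then (\<Sum>h\<in>carrier G. a h * b (inv\<^bsub>G\<^esub> h \<otimes>\<^bsub>G\<^esub> g)) else 0)"

definition ga_basis :: "('g, 'b) monoid_scheme \<Rightarrow> 'g \<Rightarrow> ('g \<Rightarrow> 'f::field)" where
  "ga_basis G g = (\<lambda>z. if z = g then 1 else 0)"

definition ga_ideal :: "('g, 'b) monoid_scheme \<Rightarrow> ('g \<Rightarrow> 'f::field) set \<Rightarrow> bool" where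
  "ga_ideal G I \<longleftrightarrow> I \<subseteq> group_alg G \<and> (\<lambda>_. 0) \<in> I
     \<and> (\<forall>a\<in>I. \<forall>b\<in>I. (\<lambda>g. a g + b g) \<in> I)
     \<and> (\<forall>a\<in>I. (\<lambda>g. - a g) \<in> I)
     \<and> (\<forall>a\<in>I. \<forall>r\<in>group_alg G. ga_mult G r a \<in> I \<and> ga_mult G a r \<in> I)"

definition ga_ideal_gen :: "('g, 'b) monoid_scheme \<Rightarrow> ('g \<Rightarrow> 'f::field) set \<Rightarrow> ('g \<Rightarrow> 'f) set" where
  "ga_ideal_gen G S = \<Inter>{I. ga_ideal G I \<and> S \<subseteq> I}"

definition Delta :: "('g, 'b) monoid_scheme \<Rightarrow> 'g set \<Rightarrow> ('g \<Rightarrow> 'f::field) set" where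
  "Delta G H = ga_ideal_gen G {(\<lambda>z. ga_basis G h z - ga_basis G \<one>\<^bsub>G\<^esub> z) | h. h \<in> H}"

definition ga_center :: "('g, 'b) monoid_scheme \<Rightarrow> ('g \<Rightarrow> 'f::field) set \<Rightarrow> ('g \<Rightarrow> 'f) set" where
  "ga_center G R = {a \<in> R. \<forall>b\<in>R. ga_mult G a b = ga_mult G b a}"

end

theory Submission imports Defs begin

lemma (in group) ga_mult_closed: "ga_mult G a b \<in> group_alg G"
  by (simp add: ga_mult_def group_alg_def)

lemma (in group) ga_assoc:
  assumes "a \<in> group_alg G" "b \<in> group_alg G" "c \<in> group_alg G"
  shows "ga_mult G (ga_mult G a b) c = ga_mult G a (ga_mult G b c)"
proof (rule ext)
  fix g show "ga_mult G (ga_mult G a b) c g = ga_mult G a (ga_mult G b c) g"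
  proof (cases "g \<in> carrier G")
    case False thus ?thesis by (simp add: ga_mult_def)
  next
    case True
    have "ga_mult G (ga_mult G a b) c g = (\<Sum>h\<in>carrier G. (\<Sum>k\<in>carrier G. a k * b (inv k \<otimes> h)) * c (inv h \<otimes> g))"
      using True by (simp add: ga_mult_def)
    also have "\<dots> = (\<Sum>h\<in>carrier G. \<Sum>k\<in>carrier G. a k * b (inv k \<otimes> h) * c (inv h \<otimes> g))"
      by (simp add: sum_distrib_right)
    also have "\<dots> = (\<Sum>k\<in>carrier G. \<Sum>h\<in>carrier G. a k * b (inv k \<otimes> h) * c (inv h \<otimes> g))"
      by (rule sum.swap)
    also have "\<dots> = (\<Sum>k\<in>carrier G. \<Sum>h\<in>carrier G. a k * (b h * c (inv h \<otimes> (inv k \<otimes> g))))"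
    proof (rule sum.cong[OF refl])
      fix k assume k: "k \<in> carrier G"
      show "(\<Sum>h\<in>carrier G. a k * b (inv k \<otimes> h) * c (inv h \<otimes> g)) = (\<Sum>h\<in>carrier G. a k * (b h * c (inv h \<otimes> (inv k \<otimes> g))))"
      proof -
        have e: "\<And>h. h \<in> carrier G \<Longrightarrow> inv h \<otimes> k \<otimes> inv k \<otimes> g = inv h \<otimes> g"
          using k True by (simp add: m_assoc)
        show ?thesis
        apply (rule sum.reindex_bij_witness[where i="\<lambda>h. k \<otimes> h" and j="\<lambda>h. inv k \<otimes> h"])
        using k True e by (auto simp: m_assoc[symmetric] inv_mult_group)
      qed
    qed
    also have "\<dots> = ga_mult G a (ga_mult G b c) g"
      using True by (simp add: ga_mult_def sum_distrib_left)
    finally show ?thesis .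
  qed
qed

lemma (in group) ga_unit_left:
  assumes fin: "finite (carrier G)"
    and "a \<in> group_alg G"
  shows "ga_mult G (ga_basis G \<one>) a = a"
proof (rule ext)
  fix g show "ga_mult G (ga_basis G \<one>) a g = a g"
  proof (cases "g \<in> carrier G")
    case True
    have "ga_mult G (ga_basis G \<one>) a g = (\<Sum>h\<in>carrier G. if h = \<one> then a (inv h \<otimes> g) else 0)"
      unfolding ga_mult_def ga_basis_def if_P[OF True] by (intro sum.cong) auto
    also have "\<dots> = a g" using True fin by simp
    finally show ?thesis .
  next
    case False thus ?thesis using assms(2) by (simp add: ga_mult_def group_alg_def)
  qed
qed

lemma (in group) ga_scalar:
  assumes fin: "finite (carrier G)"
    and "a \<in> group_alg G"
  shows "ga_mult G (\<lambda>z. if z = \<one> then c else 0) a = (\<lambda>z. c * a z)"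
proof (rule ext)
  fix g show "ga_mult G (\<lambda>z. if z = \<one> then c else 0) a g = c * a g"
  proof (cases "g \<in> carrier G")
    case True
    have "ga_mult G (\<lambda>z. if z = \<one> then c else 0) a g = (\<Sum>h\<in>carrier G. if h = \<one> then c * a (inv h \<otimes> g) else 0)"
      unfolding ga_mult_def if_P[OF True] by (intro sum.cong) auto
    also have "\<dots> = c * a g" using True fin by simp
    finally show ?thesis .
  next
    case False thus ?thesis using assms(2) by (simp add: ga_mult_def group_alg_def)
  qed
qed

lemma (in group) ga_unit_right:
  assumes fin: "finite (carrier G)"
    and "a \<in> group_alg G"
  shows "ga_mult G a (ga_basis G \<one>) = a"
proof (rule ext)
  fix g show "ga_mult G a (ga_basis G \<one>) g = a g"
  proof (cases "g \<in> carrier G")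
    case True
    have e: "\<And>h. h \<in> carrier G \<Longrightarrow> (inv h \<otimes> g = \<one>) = (h = g)"
    proof
      fix h assume h: "h \<in> carrier G"
      show "inv h \<otimes> g = \<one> \<Longrightarrow> h = g"
      proof -
        assume eq: "inv h \<otimes> g = \<one>"
        have "g = h \<otimes> (inv h \<otimes> g)" using h True by (simp add: m_assoc[symmetric])
        thus "h = g" using eq h by simp
      qed
      show "h = g \<Longrightarrow> inv h \<otimes> g = \<one>" using h by simp
    qed
    have "ga_mult G a (ga_basis G \<one>) g = (\<Sum>h\<in>carrier G. if h = g then a h else 0)"
      unfolding ga_mult_def ga_basis_def if_P[OF True] by (intro sum.cong) (auto simp: e)
    also have "\<dots> = a g" using True fin by simp
    finally show ?thesis .
  next
    case False thus ?thesis using assms(2) by (simp add: ga_mult_def group_alg_def)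
  qed
qed

lemma ga_diff_left: "ga_mult G (\<lambda>z. a z - b z) c = (\<lambda>z. ga_mult G a c z - ga_mult G b c z)"
  by (auto simp: ga_mult_def algebra_simps sum_subtractf)
lemma ga_diff_right: "ga_mult G c (\<lambda>z. a z - b z) = (\<lambda>z. ga_mult G c a z - ga_mult G c b z)"
  by (auto simp: ga_mult_def algebra_simps sum_subtractf)
lemma ga_add_left: "ga_mult G (\<lambda>z. a z + b z) c = (\<lambda>z. ga_mult G a c z + ga_mult G b c z)"
  by (auto simp: ga_mult_def algebra_simps sum.distrib)
lemma ga_add_right: "ga_mult G c (\<lambda>z. a z + b z) = (\<lambda>z. ga_mult G c a z + ga_mult G c b z)"
  by (auto simp: ga_mult_def algebra_simps sum.distrib)
lemma ga_neg_left: "ga_mult G (\<lambda>z. - a z) c = (\<lambda>z. - ga_mult G a c z)"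
  by (auto simp: ga_mult_def sum_negf)
lemma ga_neg_right: "ga_mult G c (\<lambda>z. - a z) = (\<lambda>z. - ga_mult G c a z)"
  by (auto simp: ga_mult_def sum_negf)
lemma ga_zero_left: "ga_mult G (\<lambda>z. 0) c = (\<lambda>z. 0)"
  by (auto simp: ga_mult_def)
lemma ga_zero_right: "ga_mult G c (\<lambda>z. 0) = (\<lambda>z. 0)"
  by (auto simp: ga_mult_def)

lemma (in group) ga_ideal_alg: "ga_ideal G (group_alg G)"
  by (auto simp: ga_ideal_def group_alg_def ga_mult_def)

lemma ga_ideal_Inter:
  fixes F :: "('g \<Rightarrow> 'f::field) set set" and G :: "('g, 'b) monoid_scheme"
  assumes "\<And>I. I \<in> F \<Longrightarrow> ga_ideal G I" "J \<in> F"
  shows "ga_ideal G (\<Inter>F)"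
  unfolding ga_ideal_def
proof (intro conjI ballI)
  show "\<Inter>F \<subseteq> group_alg G" using assms by (force simp: ga_ideal_def)
  show "(\<lambda>_. 0) \<in> \<Inter>F" using assms by (force simp: ga_ideal_def)
  fix a assume a: "a \<in> \<Inter>F"
  show "(\<lambda>g. - a g) \<in> \<Inter>F" using assms a by (force simp: ga_ideal_def)
  { fix b assume b: "b \<in> \<Inter>F"
    show "(\<lambda>g. a g + b g) \<in> \<Inter>F"
    proof
      fix I assume "I \<in> F" thus "(\<lambda>g. a g + b g) \<in> I" using assms a b by (force simp: ga_ideal_def) qed }
  { fix r :: "'g \<Rightarrow> 'f" assume r: "r \<in> group_alg G"
    show "ga_mult G r a \<in> \<Inter>F"
    proof
      fix I assume "I \<in> F" thus "ga_mult G r a \<in> I" using assms a r by (force simp: ga_ideal_def) qed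
    show "ga_mult G a r \<in> \<Inter>F"
    proof
      fix I assume "I \<in> F" thus "ga_mult G a r \<in> I" using assms a r by (force simp: ga_ideal_def) qed }
qed

lemma ga_ideal_gen_ideal:
  fixes S :: "('g \<Rightarrow> 'f::field) set" and G :: "('g, 'b) monoid_scheme"
  assumes "ga_ideal G (group_alg G :: ('g \<Rightarrow> 'f) set)" "S \<subseteq> group_alg G"
  shows "ga_ideal G (ga_ideal_gen G S)" and "S \<subseteq> ga_ideal_gen G S"
proof -
  show "S \<subseteq> ga_ideal_gen G S" by (auto simp: ga_ideal_gen_def)
  have ne: "group_alg G \<in> {I. ga_ideal G I \<and> S \<subseteq> I}" using assms by auto
  show "ga_ideal G (ga_ideal_gen G S)"
    unfolding ga_ideal_gen_def by (rule ga_ideal_Inter[OF _ ne]) auto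
qed

lemma (in group) cancel_helpers:
  assumes "u \<in> carrier G" "v \<in> carrier G"
  shows "u \<otimes> v \<otimes> inv v = u" "u \<otimes> inv v \<otimes> v = u"
  using assms by (simp_all add: m_assoc)

lemma ga_ideal_sum:
  assumes "ga_ideal G I" "finite A" "\<And>s. s \<in> A \<Longrightarrow> u s \<in> I"
  shows "(\<lambda>z. \<Sum>s\<in>A. u s z) \<in> I"
  using assms(2,3)
proof (induction A rule: finite_induct)
  case empty thus ?case using assms(1) by (simp add: ga_ideal_def)
next
  case (insert a A)
  have "(\<lambda>z. u a z + (\<Sum>s\<in>A. u s z)) \<in> I"
    using assms(1) insert unfolding ga_ideal_def by (metis insertI1 insertCI)
  thus ?case using insert by simp
qed

lemma (in group) conj_gen:
  assumes x: "x \<in> carrier G" and a: "a \<in> carrier G"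
    and ax: "inv a \<otimes> x \<otimes> a \<in> generate G {x}" and h: "h \<in> generate G {x}"
  shows "inv a \<otimes> h \<otimes> a \<in> generate G {x}"
proof -
  let ?H = "generate G {x}"
  have sH: "subgroup ?H G" using x by (simp add: generate_is_subgroup)
  let ?S = "{h \<in> carrier G. inv a \<otimes> h \<otimes> a \<in> ?H}"
  have "subgroup ?S G"
  proof (rule subgroupI)
    show "?S \<subseteq> carrier G" by auto
    show "?S \<noteq> {}" using a sH by (auto intro!: exI[of _ \<one>] simp: subgroup.one_closed)
  next
    fix h assume "h \<in> ?S"
    hence hc: "h \<in> carrier G" and hh: "inv a \<otimes> h \<otimes> a \<in> ?H" by auto
    have "inv a \<otimes> inv h \<otimes> a = inv (inv a \<otimes> h \<otimes> a)"
      using a hc by (simp add: inv_mult_group m_assoc)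
    thus "inv h \<in> ?S" using hh hc sH by (simp add: subgroup.m_inv_closed)
  next
    fix h k assume "h \<in> ?S" "k \<in> ?S"
    hence hc: "h \<in> carrier G" "k \<in> carrier G" and hh: "inv a \<otimes> h \<otimes> a \<in> ?H" "inv a \<otimes> k \<otimes> a \<in> ?H" by auto
    have "inv a \<otimes> (h \<otimes> k) \<otimes> a = (inv a \<otimes> h \<otimes> a) \<otimes> (inv a \<otimes> k \<otimes> a)"
      using a hc by (simp add: m_assoc[symmetric] cancel_helpers)
    thus "h \<otimes> k \<in> ?S" using hh hc sH by (simp add: subgroup.m_closed)
  qed
  hence "?H \<subseteq> ?S" using x ax by (intro generate_subgroup_incl) auto
  thus ?thesis using h by auto
qed


lemma (in group) main_lemma:
  fixes H :: "'a set"
  assumes fin: "finite (carrier G)" and sH: "subgroup H G"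
    and nH: "\<And>g h. g \<in> carrier G \<Longrightarrow> h \<in> H \<Longrightarrow> inv g \<otimes> h \<otimes> g \<in> H"
    and cH: "of_nat (card H) \<noteq> (0::'f::field)"
  shows "ga_center G (Delta G H :: ('a \<Rightarrow> 'f) set) \<subseteq> ga_center G (group_alg G)"
proof
  let ?D = "Delta G H :: ('a \<Rightarrow> 'f) set"
  let ?S = "{(\<lambda>z. ga_basis G h z - ga_basis G \<one> z :: 'f) | h. h \<in> H}"
  have Hc: "H \<subseteq> carrier G" using sH by (rule subgroup.subset)
  have finH: "finite H" using fin Hc finite_subset by blast
  have oneH: "\<one> \<in> H" using sH by (rule subgroup.one_closed)
  have SA: "?S \<subseteq> group_alg G"
    using Hc by (auto simp: group_alg_def ga_basis_def)
  have idD: "ga_ideal G ?D" and SD: "?S \<subseteq> ?D"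
    unfolding Delta_def using ga_ideal_gen_ideal[OF ga_ideal_alg SA] by auto
  have DA: "?D \<subseteq> group_alg G" using idD by (simp add: ga_ideal_def)
  define c where "c = inverse (of_nat (card H) :: 'f)"
  have cc: "c * of_nat (card H) = 1" using cH by (simp add: c_def)
  define e where "e = (\<lambda>z. if z \<in> H then c else (0::'f))"
  have eA: "e \<in> group_alg G" using Hc by (auto simp: e_def group_alg_def)
  have nH2: "(inv g \<otimes> h \<otimes> g \<in> H) = (h \<in> H)" if g: "g \<in> carrier G" and h: "h \<in> carrier G" for g h
  proof
    assume "inv g \<otimes> h \<otimes> g \<in> H"
    hence "inv (inv g) \<otimes> (inv g \<otimes> h \<otimes> g) \<otimes> inv g \<in> H" using nH[of "inv g"] g by blast
    moreover have "inv (inv g) \<otimes> (inv g \<otimes> h \<otimes> g) \<otimes> inv g = h"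
      using g h by (simp add: m_assoc[symmetric] cancel_helpers)
    ultimately show "h \<in> H" by simp
  qed (use nH g in auto)
  have ecent: "ga_mult G e b = ga_mult G b e" if b: "b \<in> group_alg G" for b
  proof (rule ext)
    fix g show "ga_mult G e b g = ga_mult G b e g"
    proof (cases "g \<in> carrier G")
      case True
      have "ga_mult G e b g = (\<Sum>h\<in>carrier G. e h * b (inv h \<otimes> g))"
        using True by (simp add: ga_mult_def)
      also have "\<dots> = (\<Sum>k\<in>carrier G. b k * e (inv k \<otimes> g))"
      proof (rule sum.reindex_bij_witness[where i="\<lambda>k. g \<otimes> inv k" and j="\<lambda>h. inv h \<otimes> g"])
        fix h assume h: "h \<in> carrier G"
        show "g \<otimes> inv (inv h \<otimes> g) = h" using h True by (simp add: inv_mult_group m_assoc[symmetric])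
        show "inv h \<otimes> g \<in> carrier G" using h True by simp
        have "inv (inv h \<otimes> g) \<otimes> g = inv g \<otimes> h \<otimes> g" using h True by (simp add: inv_mult_group)
        thus "b (inv h \<otimes> g) * e (inv (inv h \<otimes> g) \<otimes> g) = e h * b (inv h \<otimes> g)"
          using nH2[OF True h] by (simp add: e_def)
      next
        fix k assume k: "k \<in> carrier G"
        show "inv (g \<otimes> inv k) \<otimes> g = k" using k True by (simp add: inv_mult_group m_assoc)
        show "g \<otimes> inv k \<in> carrier G" using k True by simp
      qed
      also have "\<dots> = ga_mult G b e g" using True by (simp add: ga_mult_def)
      finally show ?thesis .
    qed (simp add: ga_mult_def)
  qed
  have he: "ga_mult G (ga_basis G h) e = e" if h: "h \<in> H" for h
  proof (rule ext)
    fix g show "ga_mult G (ga_basis G h) e g = e g"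
    proof (cases "g \<in> carrier G")
      case True
      have hc: "h \<in> carrier G" using h Hc by auto
      have "ga_mult G (ga_basis G h) e g = (\<Sum>k\<in>carrier G. if k = h then e (inv k \<otimes> g) else 0)"
        unfolding ga_mult_def ga_basis_def if_P[OF True] by (intro sum.cong) auto
      also have "\<dots> = e (inv h \<otimes> g)" using fin hc by simp
      also have "\<dots> = e g"
      proof -
        have "(inv h \<otimes> g \<in> H) = (g \<in> H)"
        proof
          assume "inv h \<otimes> g \<in> H"
          hence "h \<otimes> (inv h \<otimes> g) \<in> H" using h sH by (simp add: subgroup.m_closed)
          thus "g \<in> H" using hc True by (simp add: m_assoc[symmetric])
        next
          assume "g \<in> H" thus "inv h \<otimes> g \<in> H" using h sH by (simp add: subgroup.m_closed subgroup.m_inv_closed)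
        qed
        thus ?thesis by (simp add: e_def)
      qed
      finally show ?thesis .
    next
      case False thus ?thesis using eA by (simp add: ga_mult_def group_alg_def)
    qed
  qed
  have genE: "ga_mult G a e = (\<lambda>_. 0)" if aS: "a \<in> ?S" for a
  proof -
    obtain h where h: "h \<in> H" and a: "a = (\<lambda>z. ga_basis G h z - ga_basis G \<one> z)" using aS by blast
    show ?thesis unfolding a ga_diff_left he[OF h] ga_unit_left[OF fin eA] by simp
  qed
  define J where "J = {a \<in> group_alg G. ga_mult G a e = (\<lambda>_. 0)}"
  have idJ: "ga_ideal G J"
    unfolding ga_ideal_def
  proof (intro conjI ballI)
    show "J \<subseteq> group_alg G" by (auto simp: J_def)
    show "(\<lambda>_. 0) \<in> J" by (auto simp: J_def ga_zero_left group_alg_def)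
    fix a assume a: "a \<in> J"
    hence aA: "a \<in> group_alg G" and ae: "ga_mult G a e = (\<lambda>_. 0)" by (auto simp: J_def)
    show "(\<lambda>g. - a g) \<in> J" using aA ae by (auto simp: J_def ga_neg_left group_alg_def)
    { fix b :: "'a \<Rightarrow> 'f" assume "b \<in> J"
      hence bA: "b \<in> group_alg G" and be: "ga_mult G b e = (\<lambda>_. 0)" by (auto simp: J_def)
      show "(\<lambda>g. a g + b g) \<in> J" using aA ae bA be by (auto simp: J_def ga_add_left group_alg_def) }
    { fix r :: "'a \<Rightarrow> 'f" assume r: "r \<in> group_alg G"
      have "ga_mult G (ga_mult G r a) e = ga_mult G r (ga_mult G a e)" using r aA eA by (rule ga_assoc)
      thus "ga_mult G r a \<in> J" using ae by (simp add: J_def ga_mult_closed ga_zero_right)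
      have "ga_mult G (ga_mult G a r) e = ga_mult G a (ga_mult G r e)" using r aA eA by (intro ga_assoc)
      also have "\<dots> = ga_mult G a (ga_mult G e r)" using ecent[OF r] by simp
      also have "\<dots> = ga_mult G (ga_mult G a e) r" using r aA eA by (intro ga_assoc[symmetric])
      finally show "ga_mult G a r \<in> J" using ae by (simp add: J_def ga_mult_closed ga_zero_left) }
  qed
  have DJ: "?D \<subseteq> J"
  proof -
    have "?S \<subseteq> J" using genE SA by (auto simp: J_def)
    thus ?thesis unfolding Delta_def ga_ideal_gen_def using idJ by blast
  qed
  define f where "f = (\<lambda>z. ga_basis G \<one> z - e z)"
  have fA: "f \<in> group_alg G" using eA by (auto simp: f_def group_alg_def ga_basis_def)
  have fD: "f \<in> ?D"
  proof -
    define u where "u = (\<lambda>h. ga_mult G (\<lambda>z. if z = \<one> then - c else 0) (\<lambda>z. ga_basis G h z - ga_basis G \<one> z))"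
    have uD: "u h \<in> ?D" if h: "h \<in> H" for h
    proof -
      have "(\<lambda>z. ga_basis G h z - ga_basis G \<one> z) \<in> ?D" using SD h by blast
      moreover have "(\<lambda>z. if z = \<one> then - c else 0) \<in> group_alg G" by (auto simp: group_alg_def)
      ultimately show ?thesis using idD unfolding u_def ga_ideal_def by blast
    qed
    have uf: "u h = (\<lambda>z. - c * (ga_basis G h z - ga_basis G \<one> z))" if h: "h \<in> H" for h
      unfolding u_def using h Hc by (intro ga_scalar[OF fin]) (auto simp: group_alg_def ga_basis_def)
    have "(\<lambda>z. \<Sum>h\<in>H. u h z) \<in> ?D" using ga_ideal_sum[OF idD finH uD] .
    moreover have "(\<lambda>z. \<Sum>h\<in>H. u h z) = f"
    proof (rule ext)
      fix z
      have "(\<Sum>h\<in>H. u h z) = (\<Sum>h\<in>H. - c * (ga_basis G h z - ga_basis G \<one> z))"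
        using uf by simp
      also have "\<dots> = - c * (\<Sum>h\<in>H. ga_basis G h z) + c * of_nat (card H) * ga_basis G \<one> z"
        by (simp add: sum_distrib_left[symmetric] sum_subtractf algebra_simps)
      also have "(\<Sum>h\<in>H. ga_basis G h z) = (if z \<in> H then 1 else 0)"
        using finH by (simp add: ga_basis_def)
      finally show "(\<Sum>h\<in>H. u h z) = f z"
        using cc oneH by (auto simp: f_def e_def ga_basis_def)
    qed
    ultimately show ?thesis by simp
  qed
  fix \<alpha> assume "\<alpha> \<in> ga_center G ?D"
  hence aD: "\<alpha> \<in> ?D" and comm: "\<And>b. b \<in> ?D \<Longrightarrow> ga_mult G \<alpha> b = ga_mult G b \<alpha>"
    by (auto simp: ga_center_def)
  have aA: "\<alpha> \<in> group_alg G" using aD DA by auto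
  have ae: "ga_mult G \<alpha> e = (\<lambda>_. 0)" using aD DJ by (auto simp: J_def)
  have ea: "ga_mult G e \<alpha> = (\<lambda>_. 0)" using ae ecent[OF aA] by simp
  have af: "ga_mult G \<alpha> f = \<alpha>" unfolding f_def ga_diff_right ga_unit_right[OF fin aA] ae by simp
  have fa: "ga_mult G f \<alpha> = \<alpha>" unfolding f_def ga_diff_left ga_unit_left[OF fin aA] ea by simp
  have fcent: "ga_mult G f b = ga_mult G b f" if b: "b \<in> group_alg G" for b
    unfolding f_def ga_diff_left ga_diff_right ga_unit_left[OF fin b] ga_unit_right[OF fin b] ecent[OF b] ..
  show "\<alpha> \<in> ga_center G (group_alg G)"
    unfolding ga_center_def
  proof (intro CollectI conjI ballI aA)
    fix b :: "'a \<Rightarrow> 'f" assume b: "b \<in> group_alg G"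
    have fbD: "ga_mult G f b \<in> ?D" using idD fD b unfolding ga_ideal_def by blast
    have "ga_mult G \<alpha> b = ga_mult G (ga_mult G \<alpha> f) b" using af by simp
    also have "\<dots> = ga_mult G \<alpha> (ga_mult G f b)" using aA fA b by (rule ga_assoc)
    also have "\<dots> = ga_mult G (ga_mult G f b) \<alpha>" using comm[OF fbD] .
    also have "\<dots> = ga_mult G (ga_mult G b f) \<alpha>" using fcent[OF b] by simp
    also have "\<dots> = ga_mult G b (ga_mult G f \<alpha>)" using b fA aA by (rule ga_assoc)
    also have "\<dots> = ga_mult G b \<alpha>" using fa by simp
    finally show "ga_mult G \<alpha> b = ga_mult G b \<alpha>" .
  qed
qed


lemma (in group) prop_aux:
  fixes x y :: 'a
    and k :: nat and m :: nat and t :: int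
  assumes F: "CHAR('f::{field,finite}) = 3"
    and m_def: "m = 3 * k + 1"
    and t3: "t ^ 3 mod int m = 1 mod int m"
    and tgcd: "gcd (int m) (t - 1) = 1"
    and xG: "x \<in> carrier G" and yG: "y \<in> carrier G"
    and xm: "x [^]\<^bsub>G\<^esub> m = \<one>\<^bsub>G\<^esub>"
    and y3: "y [^]\<^bsub>G\<^esub> (3::nat) = \<one>\<^bsub>G\<^esub>"
    and rel: "inv\<^bsub>G\<^esub> y \<otimes>\<^bsub>G\<^esub> x \<otimes>\<^bsub>G\<^esub> y = x [^]\<^bsub>G\<^esub> t"
    and gen: "carrier G = generate G {x, y}"
    and ord: "finite (carrier G)" "card (carrier G) = 3 * m"
  shows "ga_center G (Delta G (generate G {x}) :: ('a \<Rightarrow> 'f) set)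
           \<subseteq> ga_center G (group_alg G)"
proof -
  let ?H = "generate G {x}"
  have sH: "subgroup ?H G" using xG by (simp add: generate_is_subgroup)
  have xH: "x \<in> ?H" by (simp add: generate.incl)
  have Hc: "?H \<subseteq> carrier G" using sH by (rule subgroup.subset)
  have ax1: "inv y \<otimes> x \<otimes> y \<in> ?H" unfolding rel using subgroup_int_pow_closed[OF sH xH] .
  have yconj: "inv y \<otimes> h \<otimes> y \<in> ?H" if "h \<in> ?H" for h
    using conj_gen[OF xG yG ax1 that] .
  have yy: "y \<otimes> y \<otimes> y = \<one>" using y3 yG by (simp add: numeral_3_eq_3)
  have invy: "inv y = y \<otimes> y" using yy yG by (intro inv_equality) (auto simp: m_assoc)
  have "inv (inv y) \<otimes> x \<otimes> inv y = inv y \<otimes> (inv y \<otimes> x \<otimes> y) \<otimes> y"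
  proof -
    have "inv y \<otimes> (inv y \<otimes> x \<otimes> y) \<otimes> y = (y \<otimes> y \<otimes> y) \<otimes> y \<otimes> x \<otimes> (y \<otimes> y)"
      unfolding invy using xG yG by (simp add: m_assoc)
    also have "\<dots> = y \<otimes> x \<otimes> inv y" unfolding yy invy using xG yG by simp
    finally show ?thesis using yG by simp
  qed
  hence ax2: "inv (inv y) \<otimes> x \<otimes> inv y \<in> ?H" using yconj[OF ax1] by simp
  have yconj2: "inv (inv y) \<otimes> h \<otimes> inv y \<in> ?H" if "h \<in> ?H" for h
    using conj_gen[OF xG _ ax2 that] yG by simp
  let ?K = "{g \<in> carrier G. \<forall>h\<in>?H. inv g \<otimes> h \<otimes> g \<in> ?H \<and> inv (inv g) \<otimes> h \<otimes> inv g \<in> ?H}"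
  have sK: "subgroup ?K G"
  proof (rule subgroupI)
    show "?K \<subseteq> carrier G" by auto
    show "?K \<noteq> {}" using Hc by (auto intro!: exI[of _ \<one>])
  next
    fix g assume "g \<in> ?K" thus "inv g \<in> ?K" by auto
  next
    fix g1 g2 assume g1: "g1 \<in> ?K" and g2: "g2 \<in> ?K"
    have c: "g1 \<in> carrier G" "g2 \<in> carrier G" using g1 g2 by auto
    show "g1 \<otimes> g2 \<in> ?K"
    proof (intro CollectI conjI ballI)
      show "g1 \<otimes> g2 \<in> carrier G" using c by simp
      fix h assume h: "h \<in> ?H"
      hence hc: "h \<in> carrier G" using Hc by auto
      have "inv (g1 \<otimes> g2) \<otimes> h \<otimes> (g1 \<otimes> g2) = inv g2 \<otimes> (inv g1 \<otimes> h \<otimes> g1) \<otimes> g2"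
        using c hc by (simp add: inv_mult_group m_assoc)
      thus "inv (g1 \<otimes> g2) \<otimes> h \<otimes> (g1 \<otimes> g2) \<in> ?H" using g1 g2 h by auto
      have "inv (inv (g1 \<otimes> g2)) \<otimes> h \<otimes> inv (g1 \<otimes> g2) = inv (inv g1) \<otimes> (inv (inv g2) \<otimes> h \<otimes> inv g2) \<otimes> inv g1"
        using c hc by (simp add: inv_mult_group m_assoc)
      thus "inv (inv (g1 \<otimes> g2)) \<otimes> h \<otimes> inv (g1 \<otimes> g2) \<in> ?H" using g1 g2 h by auto
    qed
  qed
  have xK: "x \<in> ?K" using xG xH sH by (auto simp: subgroup.m_closed subgroup.m_inv_closed)
  have yK: "y \<in> ?K" using yG yconj yconj2 by auto
  have "carrier G \<subseteq> ?K" unfolding gen[symmetric] using gen xK yK sK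
    by (metis (no_types, lifting) empty_subsetI generate_subgroup_incl insert_subset)
  hence nH: "\<And>g h. g \<in> carrier G \<Longrightarrow> h \<in> ?H \<Longrightarrow> inv g \<otimes> h \<otimes> g \<in> ?H" by blast
  have "card ?H = group.ord G x" using generate_pow_card[OF xG] by simp
  moreover have "group.ord G x dvd m" using pow_eq_id[OF xG] xm by simp
  ultimately have dm: "card ?H dvd m" by simp
  have cH: "of_nat (card ?H) \<noteq> (0::'f)"
  proof
    assume "of_nat (card ?H) = (0::'f)"
    hence "3 dvd card ?H" using F by (simp add: of_nat_eq_0_iff_char_dvd)
    hence "3 dvd m" using dm by (rule dvd_trans)
    thus False unfolding m_def by presburger
  qed
  show ?thesis by (rule main_lemma[OF ord(1) sH nH cH])
qed

theorem proposition3p11: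
  fixes G :: "('g, 'b) monoid_scheme" and x y :: 'g
    and k :: nat and m :: nat and t :: int
  assumes F: "CHAR('f::{field,finite}) = 3"
    and m_def: "m = 3 * k + 1"
    and t3: "t ^ 3 mod int m = 1 mod int m"
    and tgcd: "gcd (int m) (t - 1) = 1"
    and grp: "group G"
    and xG: "x \<in> carrier G" and yG: "y \<in> carrier G"
    and xm: "x [^]\<^bsub>G\<^esub> m = \<one>\<^bsub>G\<^esub>"
    and y3: "y [^]\<^bsub>G\<^esub> (3::nat) = \<one>\<^bsub>G\<^esub>"
    and rel: "inv\<^bsub>G\<^esub> y \<otimes>\<^bsub>G\<^esub> x \<otimes>\<^bsub>G\<^esub> y = x [^]\<^bsub>G\<^esub> t"
    and gen: "carrier G = generate G {x, y}"
    and ord: "finite (carrier G)" "card (carrier G) = 3 * m"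
  shows "ga_center G (Delta G (generate G {x}) :: ('g \<Rightarrow> 'f) set)
           \<subseteq> ga_center G (group_alg G)"
  using group.prop_aux[OF grp F m_def t3 tgcd xG yG xm y3 rel gen ord] .

end
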